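(* Let $K$ be a compact Hausdorff space and let $(f_n)_{n\in\mathbb{N}}$ be a pairwise disjoint sequence in $C_1(K)$. Suppose there exists a closed set $L\subseteq K$ such that $supp(f_n)\subseteq L$ for all $n\in\mathbb{N}$. Then $$K((f_n)_{n\in\mathbb{N}})=L((f_n|L)_{n\in\mathbb{N}})\cup\left(\overline{K\setminus L}\right)\times\{0\},$$ where $L((f_n|L)_{n\in\mathbb{N}})\subseteq L\times[0,1]$ is regarded as a subset of $K\times[0,1]$.
   Context: All spaces are Hausdorff. For a compact space $K$, $C_1(K)$ denotes the set of continuous functions $K\to[0,1]$; $f,g$ are disjoint if $f\cdot g=0$. For a real function $f$ on $K$, $supp(f)$ is the closure of $\{x\in K: f(x)\neq 0\}$. For a pairwise disjoint sequence $(f_n)_{n\in\mathbb{N}}$ in $C_1(K)$, let $D((f_n)_{n\in\mathbb{N}})$ be the union of all open sets $U\subseteq K$ such that $\{n: U\cap supp(f_n)\neq\emptyset\}$ is finite. The extension of $K$ by $(f_n)_{n\in\mathbb{N}}$, denoted $K((f_n)_{n\in\mathbb{N}})$, is the closure in $K\times[0,1]$ of the graph of the function $\sum_{n\in\mathbb{N}} f_n$ restricted to $D((f_n)_{n\in\mathbb{N}})$. *)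

theory Defs
  imports "HOL-Analysis.Analysis"
begin

text \<open>Real functions on K are
  functions 'a => real whose values outside topspace X are irrelevant.\<close>

definition C1 :: "'a topology \<Rightarrow> ('a \<Rightarrow> real) set" where
  "C1 X = {f. continuous_map X (top_of_set {0..1}) f}"

definition fdisjoint :: "'a topology \<Rightarrow> ('a \<Rightarrow> real) \<Rightarrow> ('a \<Rightarrow> real) \<Rightarrow> bool" where
  "fdisjoint X f g \<longleftrightarrow> (\<forall>x\<in>topspace X. f x * g x = 0)"

definition supp :: "'a topology \<Rightarrow> ('a \<Rightarrow> real) \<Rightarrow> 'a set" where
  "supp X f = X closure_of {x \<in> topspace X. f x \<noteq> 0}"

definition Dset :: "'a topology \<Rightarrow> (nat \<Rightarrow> 'a \<Rightarrow> real) \<Rightarrow> 'a set" where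
  "Dset X f = \<Union> {U. openin X U \<and> finite {n. U \<inter> supp X (f n) \<noteq> {}}}"

definition extension :: "'a topology \<Rightarrow> (nat \<Rightarrow> 'a \<Rightarrow> real) \<Rightarrow> ('a \<times> real) set" where
  "extension X f = (prod_topology X (top_of_set {0..1})) closure_of
      {(x, \<Sum>n. f n x) | x. x \<in> Dset X f}"

end

theory Submission
  imports Defs
begin

theorem lemma4p3:
  fixes X :: "'a topology" and f :: "nat \<Rightarrow> 'a \<Rightarrow> real" and L :: "'a set"
  assumes "compact_space X" and "Hausdorff_space X"
    and "\<And>n. f n \<in> C1 X"
    and "\<And>n m. n \<noteq> m \<Longrightarrow> fdisjoint X (f n) (f m)"
    and "closedin X L"
    and "\<And>n. supp X (f n) \<subseteq> L"
  shows "extension X f =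
           extension (subtopology X L) f \<union> (X closure_of (topspace X - L)) \<times> {0}"
proof -
  let ?T = "top_of_set {0..1::real}"
  let ?P = "prod_topology X ?T"
  define s where "s x = (\<Sum>n. f n x)" for x
  have LX: "L \<subseteq> topspace X" using assms(5) closedin_subset by blast
  have nz: "x \<in> topspace X \<Longrightarrow> f n x \<noteq> 0 \<Longrightarrow> x \<in> supp X (f n)" for x n
    unfolding supp_def by (rule closure_of_subset[THEN subsetD]) auto
  have suppL: "supp (subtopology X L) (f n) = supp X (f n)" for n
  proof -
    have sub: "{x \<in> topspace X. f n x \<noteq> 0} \<subseteq> L" using nz assms(6) by blast
    have "supp (subtopology X L) (f n) = L \<inter> X closure_of (L \<inter> {x \<in> topspace X \<inter> L. f n x \<noteq> 0})"
      unfolding supp_def closure_of_subtopology by simp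
    also have "L \<inter> {x \<in> topspace X \<inter> L. f n x \<noteq> 0} = {x \<in> topspace X. f n x \<noteq> 0}"
      using sub by auto
    finally show ?thesis using assms(6)[of n] unfolding supp_def by auto
  qed
  have DL: "Dset (subtopology X L) f = Dset X f \<inter> L"
  proof
    show "Dset (subtopology X L) f \<subseteq> Dset X f \<inter> L"
    proof
      fix x assume "x \<in> Dset (subtopology X L) f"
      then obtain U where U: "openin (subtopology X L) U" "finite {n. U \<inter> supp X (f n) \<noteq> {}}" "x \<in> U"
        unfolding Dset_def suppL by auto
      then obtain V where V: "openin X V" "U = V \<inter> L" by (auto simp: openin_subtopology)
      have "V \<inter> supp X (f n) = U \<inter> supp X (f n)" for n
        using V(2) assms(6)[of n] by auto
      then have "{n. V \<inter> supp X (f n) \<noteq> {}} = {n. U \<inter> supp X (f n) \<noteq> {}}"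
        by simp
      then have "x \<in> Dset X f" unfolding Dset_def using U V by auto
      then show "x \<in> Dset X f \<inter> L" using U V by blast
    qed
  next
    show "Dset X f \<inter> L \<subseteq> Dset (subtopology X L) f"
    proof
      fix x assume "x \<in> Dset X f \<inter> L"
      then obtain V where V: "openin X V" "finite {n. V \<inter> supp X (f n) \<noteq> {}}" "x \<in> V" "x \<in> L"
        unfolding Dset_def by blast
      have o: "openin (subtopology X L) (V \<inter> L)" using V(1) by (auto simp: openin_subtopology)
      have "{n. (V \<inter> L) \<inter> supp X (f n) \<noteq> {}} \<subseteq> {n. V \<inter> supp X (f n) \<noteq> {}}" by blast
      then have "finite {n. (V \<inter> L) \<inter> supp X (f n) \<noteq> {}}" using V(2) finite_subset by blast
      then show "x \<in> Dset (subtopology X L) f" unfolding Dset_def suppL using o V by auto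
    qed
  qed
  have DX: "topspace X - L \<subseteq> Dset X f"
  proof -
    have "openin X (topspace X - L)" using assms(5) by auto
    moreover have "{n. (topspace X - L) \<inter> supp X (f n) \<noteq> {}} = {}" using assms(6) by blast
    ultimately show ?thesis unfolding Dset_def
      by (intro subsetI UnionI[of "topspace X - L"]) auto
  qed
  have Dtop: "Dset X f \<subseteq> topspace X" unfolding Dset_def using openin_subset by blast
  have s0: "x \<in> topspace X - L \<Longrightarrow> s x = 0" for x
  proof -
    assume x: "x \<in> topspace X - L"
    have "f n x = 0" for n using nz[of x n] assms(6)[of n] x by blast
    then show ?thesis unfolding s_def by simp
  qed
  define GL where "GL = {(x, s x) | x. x \<in> Dset X f \<inter> L}"
  have G: "{(x, \<Sum>n. f n x) | x. x \<in> Dset X f} = GL \<union> (topspace X - L) \<times> {0}"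
    unfolding GL_def s_def[symmetric] using DX Dtop s0 by auto
  have c0: "?T closure_of {0} = {0}"
    by (rule closure_of_closedin) (auto simp: closedin_closed intro!: exI[of _ "{0}"])
  have e1: "extension X f = ?P closure_of GL \<union> (X closure_of (topspace X - L)) \<times> {0}"
    unfolding extension_def G closure_of_Un closure_of_Times c0 by simp
  have GLsub: "?P closure_of GL \<subseteq> L \<times> UNIV"
  proof -
    have "GL \<subseteq> L \<times> UNIV" unfolding GL_def by auto
    then have "?P closure_of GL \<subseteq> ?P closure_of (L \<times> UNIV)" by (rule closure_of_mono)
    also have "\<dots> \<subseteq> L \<times> UNIV" unfolding closure_of_Times closure_of_closedin[OF assms(5)] by auto
    finally show ?thesis .
  qed
  have e2: "extension (subtopology X L) f = ?P closure_of GL"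
  proof -
    have eq: "prod_topology (subtopology X L) ?T = subtopology ?P (L \<times> UNIV)"
      by (simp add: subtopology_Times)
    have "extension (subtopology X L) f = subtopology ?P (L \<times> UNIV) closure_of GL"
      unfolding extension_def DL eq GL_def s_def by (simp add: conj_commute)
    also have "\<dots> = (L \<times> UNIV) \<inter> ?P closure_of ((L \<times> UNIV) \<inter> GL)"
      by (rule closure_of_subtopology)
    also have "(L \<times> UNIV) \<inter> GL = GL" unfolding GL_def by auto
    finally show ?thesis using GLsub by auto
  qed
  show ?thesis using e1 e2 by simp
qed

end
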